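(* For every hypothesis class $\mathcal{H}$ and every integer $t\ge0$, $\mathcal{S}(\mathcal{H},t)\le\mathcal{N}(0,\mathcal{H},t)$.
   Context: Hypotheses are maps $\mathcal{X}\to\{-1,+1\}$. A depth-$t$ $Z$-valued tree $\mathbf{z}$ is a sequence of maps $\mathbf{z}_s:\{\pm1\}^{s-1}\to Z$, $s=1,\dots,t$; write $\mathbf{z}_s(\epsilon)=\mathbf{z}_s(\epsilon_1,\dots,\epsilon_{s-1})$ for $\epsilon\in\{\pm1\}^t$. For a depth-$t$ $\mathcal{X}$-valued tree $\mathbf{x}$, $S(\mathcal{H},\mathbf{x})=\{\epsilon\in\{\pm1\}^t:\exists h\in\mathcal{H},\ \epsilon_s=h(\mathbf{x}_s(\epsilon))\ \forall s\le t\}$; the tree shattering coefficient is $\mathcal{S}(\mathcal{H},t)=\max_{\mathbf{x}}|S(\mathcal{H},\mathbf{x})|$ for $t\ge1$, and $\mathcal{S}(\mathcal{H},0)=1$ if $\mathcal{H}\neq\emptyset$, $0$ otherwise. A set $V$ of depth-$t$ $\{\pm1\}$-valued trees is a sequential zero cover of $\mathcal{H}$ on $\mathbf{x}$ if for all $h\in\mathcal{H}$ and all $\epsilon\in\{\pm1\}^t$ there is $\mathbf{v}\in V$ with $\mathbf{v}_s(\epsilon)=h(\mathbf{x}_s(\epsilon))$ for $s=1,\dots,t$. $\mathcal{N}(0,\mathcal{H},\mathbf{x})$ is the minimum size of such a cover, and $\mathcal{N}(0,\mathcal{H},t)=\max_{\mathbf{x}}\mathcal{N}(0,\mathcal{H},\mathbf{x})$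 over depth-$t$ $\mathcal{X}$-valued trees. *)

theory Defs
  imports Main
begin

text \<open>A depth-t Z-valued tree is a function z :: nat \<Rightarrow> int list \<Rightarrow> Z, where
  (0-indexed) level s < t is the map z s applied to the length-s prefix
  of the sign sequence; i.e. z_{s+1}(eps) = z s (take s eps).\<close>

definition sign_seqs :: "nat \<Rightarrow> int list set" where
  "sign_seqs t = {e. length e = t \<and> set e \<subseteq> {-1, 1}}"

definition shatter_set ::
  "('a \<Rightarrow> int) set \<Rightarrow> (nat \<Rightarrow> int list \<Rightarrow> 'a) \<Rightarrow> nat \<Rightarrow> int list set" where
  "shatter_set H x t =
     {e \<in> sign_seqs t. \<exists>h\<in>H. \<forall>s<t. e ! s = h (x s (take s e))}"

definition tree_shattering_coeff :: "('a \<Rightarrow> int) set \<Rightarrow> nat \<Rightarrow> nat" where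
  "tree_shattering_coeff H t =
     (if t = 0 then (if H = {} then 0 else 1)
      else Sup {card (shatter_set H x t) | x. True})"

definition is_seq_zero_cover ::
  "('a \<Rightarrow> int) set \<Rightarrow> (nat \<Rightarrow> int list \<Rightarrow> 'a) \<Rightarrow> nat
    \<Rightarrow> (nat \<Rightarrow> int list \<Rightarrow> int) set \<Rightarrow> bool" where
  "is_seq_zero_cover H x t V \<longleftrightarrow>
     (\<forall>v\<in>V. \<forall>e\<in>sign_seqs t. \<forall>s<t. v s (take s e) \<in> {-1, 1}) \<and>
     (\<forall>h\<in>H. \<forall>e\<in>sign_seqs t. \<exists>v\<in>V. \<forall>s<t. v s (take s e) = h (x s (take s e)))"

definition zero_cover_num_tree ::
  "('a \<Rightarrow> int) set \<Rightarrow> (nat \<Rightarrow> int list \<Rightarrow> 'a) \<Rightarrow> nat \<Rightarrow> nat" where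
  "zero_cover_num_tree H x t =
     (LEAST n. \<exists>V. finite V \<and> card V = n \<and> is_seq_zero_cover H x t V)"

definition zero_cover_num :: "('a \<Rightarrow> int) set \<Rightarrow> nat \<Rightarrow> nat" where
  "zero_cover_num H t = Sup {zero_cover_num_tree H x t | x. True}"

end

theory Submission
  imports Defs
begin

lemma card_shatter_le_cover:
  assumes fin: "finite V" and cov: "is_seq_zero_cover H x t V"
  shows "card (shatter_set H x t) \<le> card V"
proof -
  have ex: "\<exists>v\<in>V. \<forall>s<t. v s (take s e) = e ! s" if "e \<in> shatter_set H x t" for e
  proof -
    from that obtain h where h: "h \<in> H" "\<forall>s<t. e ! s = h (x s (take s e))" and es: "e \<in> sign_seqs t"
      unfolding shatter_set_def by blast
    from cov h(1) es obtain v where "v \<in> V" "\<forall>s<t. v s (take s e) = h (x s (take s e))"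
      unfolding is_seq_zero_cover_def by blast
    with h show ?thesis by auto
  qed
  define f where "f e = (SOME v. v \<in> V \<and> (\<forall>s<t. v s (take s e) = e ! s))" for e
  have f: "f e \<in> V \<and> (\<forall>s<t. f e s (take s e) = e ! s)" if "e \<in> shatter_set H x t" for e
    unfolding f_def using someI_ex[OF ex[OF that, unfolded Bex_def]] .
  have inj: "inj_on f (shatter_set H x t)"
  proof (rule inj_onI)
    fix e e' assume e: "e \<in> shatter_set H x t" and e': "e' \<in> shatter_set H x t" and eq: "f e = f e'"
    have le: "length e = t" "length e' = t" using e e' unfolding shatter_set_def sign_seqs_def by auto
    show "e = e'"
    proof (rule ccontr)
      assume ne: "e \<noteq> e'"
      then obtain i where i: "i < t" "e ! i \<noteq> e' ! i"
        using le nth_equalityI by metis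
      define s where "s = (LEAST i. i < t \<and> e ! i \<noteq> e' ! i)"
      have s: "s < t" "e ! s \<noteq> e' ! s"
        using LeastI[of "\<lambda>i. i < t \<and> e ! i \<noteq> e' ! i", OF conjI[OF i]] unfolding s_def by auto
      have smin: "\<And>j. j < s \<Longrightarrow> e ! j = e' ! j"
        using not_less_Least[of _ "\<lambda>i. i < t \<and> e ! i \<noteq> e' ! i"] s(1) unfolding s_def[symmetric]
        by (metis less_trans)
      have tk: "take s e = take s e'"
        by (rule nth_equalityI) (use le s smin in auto)
      have "e ! s = f e s (take s e)" using f[OF e] s by auto
      also have "\<dots> = f e' s (take s e')" using eq tk by simp
      also have "\<dots> = e' ! s" using f[OF e'] s by auto
      finally show False using s by simp
    qed
  qed
  have "f ` shatter_set H x t \<subseteq> V" using f by auto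
  then show ?thesis using card_inj_on_le[OF inj _ fin] by blast
qed

lemma cover_bound:
  assumes hv: "\<forall>h\<in>H. \<forall>z. h z \<in> {-1, 1}"
  shows "\<exists>B. \<forall>x. zero_cover_num_tree H x t \<le> B"
proof -
  define D where "D = {..<t} \<times> {l::int list. set l \<subseteq> {-1,1} \<and> length l \<le> t}"
  have finD: "finite D" unfolding D_def by (intro finite_cartesian_product finite_lists_length_le) auto
  define G where "G = {g :: nat \<times> int list \<Rightarrow> int. \<forall>p. (p \<in> D \<longrightarrow> g p \<in> {-1,1}) \<and> (p \<notin> D \<longrightarrow> g p = 1)}"
  have finG: "finite G" unfolding G_def by (rule finite_set_of_finite_funs[OF finD]) auto
  define V where "V = (\<lambda>g s l. g (s, l)) ` G"
  have finV: "finite V" unfolding V_def using finG by simp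
  have cardV: "card V \<le> card G" unfolding V_def by (rule card_image_le[OF finG])
  have "zero_cover_num_tree H x t \<le> card G" for x
  proof -
    have cov: "is_seq_zero_cover H x t V"
      unfolding is_seq_zero_cover_def
    proof (intro conjI ballI allI impI)
      fix v e s assume "v \<in> V" "e \<in> sign_seqs t" "s < t"
      then obtain g where "g \<in> G" "v = (\<lambda>s l. g (s, l))" unfolding V_def by auto
      then show "v s (take s e) \<in> {-1,1}" unfolding G_def by (cases "(s, take s e) \<in> D") auto
    next
      fix h e assume h: "h \<in> H" and e: "e \<in> sign_seqs t"
      define g where "g p = (if p \<in> D then h (x (fst p) (snd p)) else 1)" for p
      have "g \<in> G" unfolding G_def g_def using hv h by auto
      hence "(\<lambda>s l. g (s, l)) \<in> V" unfolding V_def by auto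
      moreover have "\<forall>s<t. g (s, take s e) = h (x s (take s e))"
      proof (intro allI impI)
        fix s assume "s < t"
        moreover have "set (take s e) \<subseteq> {-1,1}" using e set_take_subset unfolding sign_seqs_def by fastforce
        moreover have "length (take s e) \<le> t" using e unfolding sign_seqs_def by auto
        ultimately have "(s, take s e) \<in> D" unfolding D_def by auto
        then show "g (s, take s e) = h (x s (take s e))" unfolding g_def by simp
      qed
      ultimately show "\<exists>v\<in>V. \<forall>s<t. v s (take s e) = h (x s (take s e))" by auto
    qed
    have "zero_cover_num_tree H x t \<le> card V"
      unfolding zero_cover_num_tree_def by (rule Least_le) (use finV cov in blast)
    with cardV show ?thesis by simp
  qed
  then show ?thesis by blast
qed

lemma cover_exists:
  assumes hv: "\<forall>h\<in>H. \<forall>z. h z \<in> {-1, 1}"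
  shows "\<exists>V. finite V \<and> card V = zero_cover_num_tree H x t \<and> is_seq_zero_cover H x t V"
proof -
  define D where "D = {..<t} \<times> {l::int list. set l \<subseteq> {-1,1} \<and> length l \<le> t}"
  have finD: "finite D" unfolding D_def by (intro finite_cartesian_product finite_lists_length_le) auto
  define G where "G = {g :: nat \<times> int list \<Rightarrow> int. \<forall>p. (p \<in> D \<longrightarrow> g p \<in> {-1,1}) \<and> (p \<notin> D \<longrightarrow> g p = 1)}"
  have finG: "finite G" unfolding G_def by (rule finite_set_of_finite_funs[OF finD]) auto
  define V where "V = (\<lambda>g s l. g (s, l)) ` G"
  have finV: "finite V" unfolding V_def using finG by simp
  have cov: "is_seq_zero_cover H x t V"
    unfolding is_seq_zero_cover_def
  proof (intro conjI ballI allI impI)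
    fix v e s assume "v \<in> V" "e \<in> sign_seqs t" "s < t"
    then obtain g where "g \<in> G" "v = (\<lambda>s l. g (s, l))" unfolding V_def by auto
    then show "v s (take s e) \<in> {-1,1}" unfolding G_def by (cases "(s, take s e) \<in> D") auto
  next
    fix h e assume h: "h \<in> H" and e: "e \<in> sign_seqs t"
    define g where "g p = (if p \<in> D then h (x (fst p) (snd p)) else 1)" for p
    have "g \<in> G" unfolding G_def g_def using hv h by auto
    hence "(\<lambda>s l. g (s, l)) \<in> V" unfolding V_def by auto
    moreover have "\<forall>s<t. g (s, take s e) = h (x s (take s e))"
    proof (intro allI impI)
      fix s assume "s < t"
      moreover have "set (take s e) \<subseteq> {-1,1}" using e set_take_subset unfolding sign_seqs_def by fastforce
      moreover have "length (take s e) \<le> t" using e unfolding sign_seqs_def by auto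
      ultimately have "(s, take s e) \<in> D" unfolding D_def by auto
      then show "g (s, take s e) = h (x s (take s e))" unfolding g_def by simp
    qed
    ultimately show "\<exists>v\<in>V. \<forall>s<t. v s (take s e) = h (x s (take s e))" by auto
  qed
  have "\<exists>n V. finite V \<and> card V = n \<and> is_seq_zero_cover H x t V" using finV cov by blast
  then have "\<exists>V. finite V \<and> card V = (LEAST n. \<exists>V. finite V \<and> card V = n \<and> is_seq_zero_cover H x t V) \<and> is_seq_zero_cover H x t V"
    by (rule LeastI_ex)
  then show ?thesis unfolding zero_cover_num_tree_def .
qed

theorem mainTheorem13:
  fixes H :: "('a \<Rightarrow> int) set" and t :: nat
  assumes "\<forall>h\<in>H. \<forall>z. h z \<in> {-1, 1}"
  shows "tree_shattering_coeff H t \<le> zero_cover_num H t"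
proof -
  obtain B where B: "\<And>x. zero_cover_num_tree H x t \<le> B" using cover_bound[OF assms] by blast
  have bdd: "bdd_above {zero_cover_num_tree H x t | x. True}"
    unfolding bdd_above_def using B by blast
  have le: "zero_cover_num_tree H x t \<le> zero_cover_num H t" for x
    unfolding zero_cover_num_def by (rule cSup_upper[OF _ bdd]) blast
  have key: "card (shatter_set H x t) \<le> zero_cover_num H t" for x
  proof -
    obtain V where V: "finite V" "card V = zero_cover_num_tree H x t" "is_seq_zero_cover H x t V"
      using cover_exists[OF assms] by blast
    show ?thesis using card_shatter_le_cover[OF V(1) V(3)] V(2) le[of x] by simp
  qed
  show ?thesis
  proof (cases "t = 0")
    case True
    show ?thesis
    proof (cases "H = {}")
      case True then show ?thesis using \<open>t = 0\<close> unfolding tree_shattering_coeff_def by simp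
    next
      case False
      then obtain h where h: "h \<in> H" by blast
      have "[] \<in> shatter_set H (\<lambda>_ _. undefined) t"
        using h \<open>t = 0\<close> unfolding shatter_set_def sign_seqs_def by auto
      moreover have "finite (shatter_set H (\<lambda>_ _. undefined) t)"
        using \<open>t = 0\<close> unfolding shatter_set_def sign_seqs_def by (auto intro: finite_subset[of _ "{[]}"])
      ultimately have "1 \<le> card (shatter_set H (\<lambda>_ _. undefined) t)"
        by (metis One_nat_def Suc_leI card_gt_0_iff empty_iff)
      with key[of "\<lambda>_ _. undefined"] False True show ?thesis unfolding tree_shattering_coeff_def by simp
    qed
  next
    case False
    then show ?thesis unfolding tree_shattering_coeff_def
      using key by (auto intro!: cSup_least)
  qed
qed

end
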